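(* Let $S$ be a completely nonunitary partial isometry on a Hilbert space $\mathcal H$ with $\dim\mathcal K=\dim\tilde{\mathcal K}$ (possibly infinite), where $\mathcal K=(S\mathcal H)^\perp$ and $\tilde{\mathcal K}=\ker S$. For a unitary $A:\tilde{\mathcal K}\to\mathcal K$ define $U_A h=Sh$ for $h\perp\tilde{\mathcal K}$ and $U_Ah=Ah$ for $h\in\tilde{\mathcal K}$. Then $U_A$ is unitary and $\overline{\operatorname{span}}\{U_A^n k: k\in\mathcal K,\ n\in\mathbb Z\}=\mathcal H$. In particular, if $\dim\mathcal K=\dim\tilde{\mathcal K}=1$, then for any unit vector $k\in\mathcal K$ and any $\alpha\in\mathbb T$, with $U_\alpha$ defined by $A\tilde k=\alpha k$ for a unit vector $\tilde k\in\tilde{\mathcal K}$, one has $\overline{\operatorname{span}}\{U_\alpha^n k: n\in\mathbb Z\}=\mathcal H$.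
   Context: A contraction is completely nonunitary (c.n.u.) if there is no nonzero reducing subspace on which it is unitary. For a partial isometry $S$, $S\mathcal H$ is its final space and $(\ker S)^\perp$ its initial space. *)

theory Defs
  imports "HOL-Analysis.Analysis"
begin

text \<open>The distribution has no complex inner product spaces, so we introduce them as a
type class: a real normed vector space with a complex scalar multiplication extending
the real one and a sesquilinear, conjugate-symmetric inner product (linear in the second
argument) inducing the norm.\<close>

class complex_inner = real_normed_vector +
  fixes scaleC :: "complex \<Rightarrow> 'a \<Rightarrow> 'a"
    and cinner :: "'a \<Rightarrow> 'a \<Rightarrow> complex"
  assumes scaleC_add_right: "scaleC c (x + y) = scaleC c x + scaleC c y"
    and scaleC_add_left: "scaleC (c + d) x = scaleC c x + scaleC d x"
    and scaleC_scaleC: "scaleC c (scaleC d x) = scaleC (c * d) x"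
    and scaleC_one: "scaleC 1 x = x"
    and scaleR_scaleC: "scaleR r x = scaleC (complex_of_real r) x"
    and cinner_add_right: "cinner x (y + z) = cinner x y + cinner x z"
    and cinner_scaleC_right: "cinner x (scaleC c y) = c * cinner x y"
    and cinner_commute: "cinner y x = cnj (cinner x y)"
    and cinner_self: "cinner x x = complex_of_real ((norm x)\<^sup>2)"

class chilbert_space = complex_inner + complete_space

definition clinear :: "('a::complex_inner \<Rightarrow> 'b::complex_inner) \<Rightarrow> bool" where
  "clinear f \<longleftrightarrow> (\<forall>x y. f (x + y) = f x + f y) \<and> (\<forall>c x. f (scaleC c x) = scaleC c (f x))"

definition cspan :: "'a::complex_inner set \<Rightarrow> 'a set" where
  "cspan B = {(\<Sum>x\<in>F. scaleC (c x) x) | F c. finite F \<and> F \<subseteq> B}"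

definition csubspace :: "'a::complex_inner set \<Rightarrow> bool" where
  "csubspace M \<longleftrightarrow> 0 \<in> M \<and> (\<forall>x\<in>M. \<forall>y\<in>M. x + y \<in> M) \<and> (\<forall>c. \<forall>x\<in>M. scaleC c x \<in> M)"

definition closed_csubspace :: "'a::complex_inner set \<Rightarrow> bool" where
  "closed_csubspace M \<longleftrightarrow> csubspace M \<and> closed M"

definition orth :: "'a::complex_inner set \<Rightarrow> 'a set" where
  "orth M = {y. \<forall>x\<in>M. cinner x y = 0}"

definition ker :: "('a::complex_inner \<Rightarrow> 'b::complex_inner) \<Rightarrow> 'a set" where
  "ker T = {x. T x = 0}"

definition bounded_clinear :: "('a::complex_inner \<Rightarrow> 'b::complex_inner) \<Rightarrow> bool" where
  "bounded_clinear T \<longleftrightarrow> clinear T \<and> (\<exists>K. \<forall>x. norm (T x) \<le> norm x * K)"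

definition partial_isometry :: "('a::chilbert_space \<Rightarrow> 'a) \<Rightarrow> bool" where
  "partial_isometry S \<longleftrightarrow> bounded_clinear S \<and> (\<forall>x\<in>orth (ker S). norm (S x) = norm x)"

definition contraction :: "('a::chilbert_space \<Rightarrow> 'a) \<Rightarrow> bool" where
  "contraction T \<longleftrightarrow> bounded_clinear T \<and> (\<forall>x. norm (T x) \<le> norm x)"

definition reducing_subspace :: "('a::chilbert_space \<Rightarrow> 'a) \<Rightarrow> 'a set \<Rightarrow> bool" where
  "reducing_subspace T M \<longleftrightarrow> closed_csubspace M \<and> T ` M \<subseteq> M \<and> T ` orth M \<subseteq> orth M"

definition unitary_on :: "('a::chilbert_space \<Rightarrow> 'a) \<Rightarrow> 'a set \<Rightarrow> bool" where
  "unitary_on T M \<longleftrightarrow> (\<forall>x\<in>M. norm (T x) = norm x) \<and> T ` M = M"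

definition completely_nonunitary :: "('a::chilbert_space \<Rightarrow> 'a) \<Rightarrow> bool" where
  "completely_nonunitary T \<longleftrightarrow> contraction T \<and>
     (\<forall>M. reducing_subspace T M \<and> unitary_on T M \<longrightarrow> M = {0})"

definition unitary :: "('a::chilbert_space \<Rightarrow> 'a) \<Rightarrow> bool" where
  "unitary U \<longleftrightarrow> clinear U \<and> (\<forall>x. norm (U x) = norm x) \<and> surj U"

definition unitary_between :: "('a::chilbert_space \<Rightarrow> 'a) \<Rightarrow> 'a set \<Rightarrow> 'a set \<Rightarrow> bool" where
  "unitary_between A M N \<longleftrightarrow>
     (\<forall>x\<in>M. \<forall>y\<in>M. A (x + y) = A x + A y) \<and> (\<forall>c. \<forall>x\<in>M. A (scaleC c x) = scaleC c (A x)) \<and>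
     (\<forall>x\<in>M. norm (A x) = norm x) \<and> A ` M = N"

definition orthonormal_basis :: "'a::chilbert_space set \<Rightarrow> 'a set \<Rightarrow> bool" where
  "orthonormal_basis M B \<longleftrightarrow> B \<subseteq> M \<and> (\<forall>x\<in>B. cinner x x = 1) \<and>
     (\<forall>x\<in>B. \<forall>y\<in>B. x \<noteq> y \<longrightarrow> cinner x y = 0) \<and> closure (cspan B) = M"

definition same_hilbert_dim :: "'a::chilbert_space set \<Rightarrow> 'a set \<Rightarrow> bool" where
  "same_hilbert_dim M N \<longleftrightarrow>
     (\<exists>B C. orthonormal_basis M B \<and> orthonormal_basis N C \<and> (\<exists>f. bij_betw f B C))"

definition hilbert_dim_one :: "'a::chilbert_space set \<Rightarrow> bool" where
  "hilbert_dim_one M \<longleftrightarrow> (\<exists>B. orthonormal_basis M B \<and> card B = 1)"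

definition zpow :: "('a \<Rightarrow> 'a) \<Rightarrow> int \<Rightarrow> 'a \<Rightarrow> 'a" where
  "zpow U n = (if 0 \<le> n then U ^^ nat n else (inv U) ^^ nat (- n))"

end

theory Submission
  imports Defs
begin


lemma scaleC_zero_left[simp]: "scaleC 0 (x::'a::complex_inner) = 0"
proof -
  have "scaleC 0 x = scaleC 0 x + scaleC 0 x" using scaleC_add_left[of 0 0 x] by simp
  then show ?thesis by simp
qed

lemma scaleC_zero_right[simp]: "scaleC c (0::'a::complex_inner) = 0"
proof -
  have "scaleC c (0::'a) = scaleC c 0 + scaleC c 0" using scaleC_add_right[of c 0 0] by simp
  then show ?thesis by simp
qed

lemma scaleC_minus_left: "scaleC (- c) (x::'a::complex_inner) = - scaleC c x"
  using minus_unique[of "scaleC c x" "scaleC (-c) x"] scaleC_add_left[of c "-c" x] by simp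

lemma scaleC_minus_right: "scaleC c (- x::'a::complex_inner) = - scaleC c x"
  using minus_unique[of "scaleC c x" "scaleC c (-x)"] scaleC_add_right[of c x "-x"] by simp

lemma scaleC_diff_right: "scaleC c (x - y::'a::complex_inner) = scaleC c x - scaleC c y"
  using scaleC_add_right[of c x "-y"] scaleC_minus_right[of c y] by simp

lemma scaleC_diff_left: "scaleC (c - d) (x::'a::complex_inner) = scaleC c x - scaleC d x"
  using scaleC_add_left[of c "-d" x] scaleC_minus_left[of d x] by simp

lemma cinner_add_left: "cinner (x + y) (z::'a::complex_inner) = cinner x z + cinner y z"
  by (metis cinner_commute cinner_add_right complex_cnj_add)

lemma cinner_scaleC_left: "cinner (scaleC c x) (y::'a::complex_inner) = cnj c * cinner x y"
  by (metis cinner_commute cinner_scaleC_right complex_cnj_mult)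

lemma cinner_zero_right[simp]: "cinner x (0::'a::complex_inner) = 0"
  using cinner_add_right[of x 0 0] by simp

lemma cinner_zero_left[simp]: "cinner 0 (x::'a::complex_inner) = 0"
  using cinner_add_left[of 0 0 x] by simp

lemma cinner_minus_right: "cinner x (- y::'a::complex_inner) = - cinner x y"
  using minus_unique[of "cinner x y" "cinner x (-y)"] cinner_add_right[of x y "-y"] by simp

lemma cinner_minus_left: "cinner (- x) (y::'a::complex_inner) = - cinner x y"
  using minus_unique[of "cinner x y" "cinner (-x) y"] cinner_add_left[of x "-x" y] by simp

lemma cinner_diff_right: "cinner x (y - z::'a::complex_inner) = cinner x y - cinner x z"
  using cinner_add_right[of x y "-z"] cinner_minus_right[of x z] by simp

lemma cinner_diff_left: "cinner (x - y) (z::'a::complex_inner) = cinner x z - cinner y z"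
  using cinner_add_left[of x "-y" z] cinner_minus_left[of y z] by simp

lemma cinner_scaleR_left: "cinner (scaleR r x) (y::'a::complex_inner) = scaleR r (cinner x y)"
  by (simp add: scaleR_scaleC cinner_scaleC_left scaleR_conv_of_real)

lemma cinner_scaleR_right: "cinner x (scaleR r y::'a::complex_inner) = scaleR r (cinner x y)"
  by (simp add: scaleR_scaleC cinner_scaleC_right scaleR_conv_of_real)

lemma norm_sq_cinner: "(norm (x::'a::complex_inner))^2 = Re (cinner x x)"
  by (simp add: cinner_self)

lemma cinner_self_Im: "Im (cinner (x::'a::complex_inner) x) = 0"
  by (simp add: cinner_self)

lemma norm_add_sq: "(norm (x + y::'a::complex_inner))^2 = (norm x)^2 + (norm y)^2 + 2 * Re (cinner x y)"
proof -
  have "cinner (x+y) (x+y) = cinner x x + cinner y y + (cinner x y + cnj (cinner x y))"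
    by (simp add: cinner_add_left cinner_add_right algebra_simps cinner_commute[of x y])
  then have "Re (cinner (x+y) (x+y)) = Re (cinner x x) + Re (cinner y y) + 2 * Re (cinner x y)"
    by simp
  then show ?thesis by (simp add: norm_sq_cinner)
qed

lemma pythagoras: "cinner x (y::'a::complex_inner) = 0 \<Longrightarrow> (norm (x + y))^2 = (norm x)^2 + (norm y)^2"
  by (simp add: norm_add_sq)

lemma norm_scaleC: "norm (scaleC c (x::'a::complex_inner)) = cmod c * norm x"
proof -
  have "cinner (scaleC c x) (scaleC c x) = cnj c * c * cinner x x"
    by (simp add: cinner_scaleC_left cinner_scaleC_right)
  also have "cnj c * c = complex_of_real ((cmod c)^2)"
    using complex_norm_square[of c] by (simp add: mult.commute)
  finally have "cinner (scaleC c x) (scaleC c x) = complex_of_real ((cmod c)^2 * (norm x)^2)"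
    by (simp add: cinner_self)
  then have "(norm (scaleC c x))^2 = (cmod c)^2 * (norm x)^2"
    by (simp add: norm_sq_cinner)
  then show ?thesis
    by (metis abs_of_nonneg norm_ge_zero real_sqrt_abs zero_le_mult_iff real_sqrt_mult)
qed

lemma cauchy_schwarz: "cmod (cinner x (y::'a::complex_inner)) \<le> norm x * norm y"
proof (cases "y = 0")
  case True then show ?thesis by simp
next
  case False
  then have ny: "norm y > 0" by simp
  define t where "t = cinner y x / of_real ((norm y)^2)"
  have "0 \<le> Re (cinner (x - scaleC t y) (x - scaleC t y))"
    by (simp add: cinner_self)
  also have "cinner (x - scaleC t y) (x - scaleC t y)
      = cinner x x - t * cinner x y - cnj t * cinner y x + cnj t * t * cinner y y"
    by (simp add: cinner_diff_left cinner_diff_right cinner_scaleC_left cinner_scaleC_right algebra_simps)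
  also have "\<dots> = of_real ((norm x)^2) - of_real ((cmod (cinner x y))^2 / (norm y)^2)"
  proof -
    define a where "a = cinner y x"
    define N where "N = complex_of_real ((norm y)^2)"
    have N0: "N \<noteq> 0" using ny by (simp add: N_def)
    have cN: "cnj N = N" by (simp add: N_def)
    have xy: "cinner x y = cnj a" by (simp add: a_def cinner_commute[of x y])
    have yy: "cinner y y = N" by (simp add: N_def cinner_self)
    have aa: "cnj a * a = complex_of_real ((cmod (cinner x y))^2)"
      using complex_norm_square[of a] by (simp add: xy mult.commute norm_complex_def[symmetric])
    have tt: "t = a / N" by (simp add: t_def a_def N_def)
    have "t * cinner x y = cnj a * a / N" by (simp add: tt xy)
    moreover have "cnj t * cinner y x = cnj a * a / N" by (simp add: tt cN a_def)
    moreover have "cnj t * t * cinner y y = cnj a * a / N" using N0 by (simp add: tt cN yy power2_eq_square)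
    ultimately have "cinner x x - t * cinner x y - cnj t * cinner y x + cnj t * t * cinner y y
       = cinner x x - cnj a * a / N" by simp
    also have "\<dots> = of_real ((norm x)^2) - of_real ((cmod (cinner x y))^2 / (norm y)^2)"
      by (simp add: aa N_def cinner_self)
    finally show ?thesis .
  qed
  finally have "(cmod (cinner x y))^2 / (norm y)^2 \<le> (norm x)^2" by simp
  then have "(cmod (cinner x y))^2 \<le> (norm x * norm y)^2" using ny
    by (simp add: field_simps power_mult_distrib)
  then show ?thesis
    using power2_le_imp_le by fastforce
qed



lemma bounded_bilinear_cinner: "bounded_bilinear (cinner :: 'a::complex_inner \<Rightarrow> 'a \<Rightarrow> complex)"
  apply standard
      apply (simp add: cinner_add_left)
     apply (simp add: cinner_add_right)
    apply (simp add: cinner_scaleR_left)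
   apply (simp add: cinner_scaleR_right)
  apply (rule exI[of _ 1]) using cauchy_schwarz by auto

lemma bounded_linear_scaleC: "bounded_linear (scaleC c :: 'a::complex_inner \<Rightarrow> 'a)"
  apply (rule bounded_linear_intro[where K="cmod c"])
    apply (simp add: scaleC_add_right)
   apply (simp add: scaleR_scaleC scaleC_scaleC mult.commute)
  apply (simp add: norm_scaleC)
  done

lemma continuous_scaleC_left: "continuous_on UNIV (\<lambda>c. scaleC c (x::'a::complex_inner))"
proof -
  have "bounded_linear (\<lambda>c. scaleC c x)"
    apply (rule bounded_linear_intro[where K="norm x"])
      apply (simp add: scaleC_add_left)
     apply (simp add: scaleR_scaleC scaleC_scaleC scaleR_conv_of_real)
    apply (simp add: norm_scaleC)
    done
  then show ?thesis using linear_continuous_on by blast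
qed

lemma clinear_bounded_linear:
  assumes "clinear f" "\<And>x. norm (f x) \<le> norm x * K"
  shows "bounded_linear f"
  using assms unfolding clinear_def
  by (intro bounded_linear_intro[where K=K]) (auto simp: scaleR_scaleC)

lemma bounded_clinear_bounded_linear: "bounded_clinear f \<Longrightarrow> bounded_linear f"
  unfolding bounded_clinear_def using clinear_bounded_linear by blast

lemma clinear_isometry_bounded_linear:
  "clinear f \<Longrightarrow> (\<And>x. norm (f x) = norm x) \<Longrightarrow> bounded_linear f"
  using clinear_bounded_linear[of f 1] by simp

lemma clinear_add: "clinear f \<Longrightarrow> f (x + y) = f x + f y" unfolding clinear_def by blast
lemma clinear_scaleC: "clinear f \<Longrightarrow> f (scaleC c x) = scaleC c (f x)" unfolding clinear_def by blast
lemma clinear_zero: "clinear f \<Longrightarrow> f 0 = 0"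
  using clinear_scaleC[of f 0 0] by simp
lemma clinear_minus: "clinear f \<Longrightarrow> f (- x) = - f x"
  using clinear_scaleC[of f "-1" x] by (simp add: scaleC_minus_left scaleC_one)
lemma clinear_diff: "clinear f \<Longrightarrow> f (x - y) = f x - f y"
  using clinear_add[of f x "-y"] clinear_minus[of f y] by simp
lemma clinear_sum: "clinear f \<Longrightarrow> f (sum g F) = (\<Sum>i\<in>F. f (g i))"
  by (induction F rule: infinite_finite_induct) (auto simp: clinear_zero clinear_add)

lemma clinear_comp: "clinear f \<Longrightarrow> clinear g \<Longrightarrow> clinear (f \<circ> g)"
  unfolding clinear_def by simp

lemma clinear_id: "clinear id" unfolding clinear_def by simp

lemma clinear_funpow: "clinear (f::'a::complex_inner \<Rightarrow> 'a) \<Longrightarrow> clinear (f ^^ n)"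
proof (induction n)
  case 0 then show ?case by (simp add: clinear_def)
next
  case (Suc n) then show ?case using clinear_comp[of f "f^^n"] by (simp add: comp_def)
qed

lemma clinear_inv: assumes "clinear f" "bij f" shows "clinear (inv f)"
  unfolding clinear_def
proof safe
  have s: "f (inv f z) = z" for z using assms(2) by (simp add: bij_is_surj surj_f_inv_f)
  fix x y
  have "f (inv f x + inv f y) = x + y" using clinear_add[OF assms(1)] s by simp
  then show "inv f (x + y) = inv f x + inv f y"
    using assms(2) bij_inv_eq_iff by metis
next
  have s: "f (inv f z) = z" for z using assms(2) by (simp add: bij_is_surj surj_f_inv_f)
  fix c x
  have "f (scaleC c (inv f x)) = scaleC c x" using clinear_scaleC[OF assms(1)] s by simp
  then show "inv f (scaleC c x) = scaleC c (inv f x)"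
    using assms(2) bij_inv_eq_iff by metis
qed

lemma scaleC_sum_right: "scaleC c (sum g F) = (\<Sum>i\<in>F. scaleC c (g i :: 'a::complex_inner))"
  by (induction F rule: infinite_finite_induct) (auto simp: scaleC_add_right)

lemma cinner_sum_right: "cinner x (sum g F) = (\<Sum>i\<in>F. cinner x (g i :: 'a::complex_inner))"
  by (induction F rule: infinite_finite_induct) (auto simp: cinner_add_right)

lemma closed_orth: "closed (orth (M::'a::complex_inner set))"
proof -
  have "orth M = (\<Inter>x\<in>M. {y. cinner x y = 0})" unfolding orth_def by auto
  moreover have "closed {y. cinner x y = 0}" for x :: 'a
    by (intro closed_Collect_eq continuous_on_const linear_continuous_on
        bounded_bilinear.bounded_linear_right[OF bounded_bilinear_cinner])
  ultimately show ?thesis by auto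
qed

lemma csubspace_orth: "csubspace (orth (M::'a::complex_inner set))"
  unfolding csubspace_def orth_def by (auto simp: cinner_add_right cinner_scaleC_right)

lemma closed_csubspace_orth: "closed_csubspace (orth M)"
  by (simp add: closed_csubspace_def closed_orth csubspace_orth)

lemma orth_antimono: "M \<subseteq> N \<Longrightarrow> orth N \<subseteq> orth M"
  unfolding orth_def by auto

lemma orth_orth_sup: "M \<subseteq> orth (orth M)"
  unfolding orth_def by (auto, metis cinner_commute complex_cnj_zero)

lemma csubspace_sum: "csubspace M \<Longrightarrow> (\<And>i. i \<in> F \<Longrightarrow> g i \<in> M) \<Longrightarrow> sum g F \<in> M"
  by (induction F rule: infinite_finite_induct) (auto simp: csubspace_def)

lemma csubspace_diff: "csubspace M \<Longrightarrow> x \<in> M \<Longrightarrow> y \<in> M \<Longrightarrow> x - y \<in> M"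
  unfolding csubspace_def by (metis diff_conv_add_uminus scaleC_minus_left scaleC_one)

lemma csubspace_scaleR: "csubspace M \<Longrightarrow> x \<in> M \<Longrightarrow> scaleR r x \<in> M"
  unfolding csubspace_def by (simp add: scaleR_scaleC)

lemma cspan_superset: "B \<subseteq> cspan B"
proof
  fix x assume "x \<in> B"
  then show "x \<in> cspan B" unfolding cspan_def
    by (auto intro!: exI[of _ "{x}"] exI[of _ "\<lambda>_. 1"] simp: scaleC_one)
qed

lemma cspan_minimal: "csubspace M \<Longrightarrow> B \<subseteq> M \<Longrightarrow> cspan B \<subseteq> M"
  unfolding cspan_def
  by (auto intro!: csubspace_sum) (auto simp: csubspace_def)

lemma sum_extend_coeff:
  assumes "finite G" "F \<subseteq> G"
  shows "(\<Sum>x\<in>F. scaleC (c x) x) = (\<Sum>x\<in>G. scaleC (if x \<in> F then c x else 0) (x::'a::complex_inner))"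
proof -
  have "(\<Sum>x\<in>G. scaleC (if x \<in> F then c x else 0) x) = (\<Sum>x\<in>F. scaleC (if x \<in> F then c x else 0) x)"
    using assms by (intro sum.mono_neutral_right) auto
  then show ?thesis by simp
qed

lemma csubspace_cspan: "csubspace (cspan B)"
  unfolding csubspace_def
proof safe
  show "0 \<in> cspan B" unfolding cspan_def by (auto intro!: exI[of _ "{}"])
next
  fix x y assume "x \<in> cspan B" "y \<in> cspan B"
  then obtain F c G d where F: "finite F" "F \<subseteq> B" "x = (\<Sum>x\<in>F. scaleC (c x) x)"
    and G: "finite G" "G \<subseteq> B" "y = (\<Sum>x\<in>G. scaleC (d x) x)"
    unfolding cspan_def by auto
  define e where "e x = (if x \<in> F then c x else 0) + (if x \<in> G then d x else 0)" for x
  have "x + y = (\<Sum>z\<in>F\<union>G. scaleC (e z) z)"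
    unfolding F(3) G(3) e_def
    using sum_extend_coeff[of "F\<union>G" F c] sum_extend_coeff[of "F\<union>G" G d] F G
    by (simp add: scaleC_add_left sum.distrib)
  then show "x + y \<in> cspan B" unfolding cspan_def using F G by blast
next
  fix a x assume "x \<in> cspan B"
  then obtain F c where F: "finite F" "F \<subseteq> B" "x = (\<Sum>x\<in>F. scaleC (c x) x)"
    unfolding cspan_def by auto
  have "scaleC a x = (\<Sum>z\<in>F. scaleC (a * c z) z)"
    unfolding F(3) by (simp add: scaleC_sum_right scaleC_scaleC)
  then show "scaleC a x \<in> cspan B" unfolding cspan_def using F
    by (auto intro!: exI[of _ F] exI[of _ "\<lambda>z. a * c z"])
qed

lemma cspan_mono2: "B \<subseteq> cspan C \<Longrightarrow> cspan B \<subseteq> cspan C"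
  by (simp add: cspan_minimal csubspace_cspan)

lemma clinear_image_cspan:
  assumes "clinear f" "f ` B \<subseteq> cspan C"
  shows "f ` cspan B \<subseteq> cspan C"
proof
  fix y assume "y \<in> f ` cspan B"
  then obtain F c where F: "finite F" "F \<subseteq> B" "y = f (\<Sum>x\<in>F. scaleC (c x) x)"
    unfolding cspan_def by auto
  have "y = (\<Sum>x\<in>F. scaleC (c x) (f x))"
    using assms(1) by (simp add: F(3) clinear_sum clinear_scaleC)
  also have "\<dots> \<in> cspan C"
    apply (rule csubspace_sum[OF csubspace_cspan])
    using F assms(2) csubspace_cspan[of C] unfolding csubspace_def by blast
  finally show "y \<in> cspan C" .
qed

lemma csubspace_closure:
  assumes "csubspace M" shows "csubspace (closure (M::'a::complex_inner set))"
  unfolding csubspace_def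
proof safe
  show "0 \<in> closure M" using assms closure_subset unfolding csubspace_def by blast
next
  fix x y assume "x \<in> closure M" "y \<in> closure M"
  then obtain f g where "\<forall>n. f n \<in> M" "f \<longlonglongrightarrow> x" "\<forall>n. g n \<in> M" "g \<longlonglongrightarrow> y"
    unfolding closure_sequential by blast
  then show "x + y \<in> closure M" unfolding closure_sequential
    using assms unfolding csubspace_def by (intro exI[of _ "\<lambda>n. f n + g n"]) (auto intro: tendsto_add)
next
  fix c x assume "x \<in> closure M"
  then obtain f where "\<forall>n. f n \<in> M" "f \<longlonglongrightarrow> x"
    unfolding closure_sequential by blast
  then show "scaleC c x \<in> closure M" unfolding closure_sequential
    using assms bounded_linear.tendsto[OF bounded_linear_scaleC]
    unfolding csubspace_def by (intro exI[of _ "\<lambda>n. scaleC c (f n)"]) auto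
qed



lemma parallelogram: "(norm (u - v::'a::complex_inner))^2 + (norm (u + v))^2 = 2*(norm u)^2 + 2*(norm v)^2"
proof -
  have "(norm (u + (-v)))^2 = (norm u)^2 + (norm v)^2 - 2 * Re (cinner u v)"
    using norm_add_sq[of u "-v"] by (simp add: cinner_minus_right)
  then show ?thesis using norm_add_sq[of u v] by simp
qed

lemma norm_diff_scale_sq:
  fixes y z :: "'a::complex_inner"
  defines "w \<equiv> cinner y z"
  shows "(norm (z - scaleC (of_real t * w) y))^2 = (norm z)^2 - 2*t*(cmod w)^2 + t^2*(cmod w)^2*(norm y)^2"
proof -
  define s where "s = complex_of_real t * w"
  have zy: "cinner z y = cnj w" by (simp add: w_def cinner_commute[of z y])
  have ww: "cnj w * w = complex_of_real ((cmod w)^2)"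
    using complex_norm_square[of w] by (simp add: mult.commute)
  have "cinner (z - scaleC s y) (z - scaleC s y)
      = cinner z z - s * cinner z y - cnj s * cinner y z + cnj s * s * cinner y y"
    by (simp add: cinner_diff_left cinner_diff_right cinner_scaleC_left cinner_scaleC_right algebra_simps)
  also have "\<dots> = cinner z z - 2 * of_real t * (cnj w * w) + (of_real t)^2 * (cnj w * w) * cinner y y"
    by (simp add: s_def zy w_def[symmetric] algebra_simps power2_eq_square)
  also have "\<dots> = complex_of_real ((norm z)^2 - 2*t*(cmod w)^2 + t^2*(cmod w)^2*(norm y)^2)"
    by (simp add: ww cinner_self)
  finally show ?thesis unfolding s_def by (simp add: norm_sq_cinner)
qed

lemma projection_exists:
  fixes M :: "'a::chilbert_space set"
  assumes cs: "closed_csubspace M"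
  shows "\<exists>m\<in>M. x - m \<in> orth M"
proof -
  have sub: "csubspace M" and cl: "closed M" using cs by (auto simp: closed_csubspace_def)
  have M0: "0 \<in> M" using sub by (simp add: csubspace_def)
  define d where "d = Inf ((\<lambda>m. norm (x - m)) ` M)"
  have bdd: "bdd_below ((\<lambda>m. norm (x - m)) ` M)" by (rule bdd_belowI[of _ 0]) auto
  have dle: "d \<le> norm (x - m)" if "m \<in> M" for m
    unfolding d_def using bdd that by (rule cINF_lower)
  have d0: "0 \<le> d" using dle[OF M0] unfolding d_def
    by (metis M0 cINF_greatest empty_iff norm_ge_zero)
  have "\<exists>m\<in>M. norm (x - m) < d + inverse (real (Suc n))" for n
  proof -
    have "Inf ((\<lambda>m. norm (x - m)) ` M) < d + inverse (real (Suc n))"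
      unfolding d_def[symmetric] by simp
    then obtain r where "r \<in> (\<lambda>m. norm (x - m)) ` M" "r < d + inverse (real (Suc n))"
      using cInf_lessD[of "(\<lambda>m. norm (x - m)) ` M"] M0 by blast
    then show ?thesis by auto
  qed
  then obtain f where f: "\<And>n. f n \<in> M" "\<And>n. norm (x - f n) < d + inverse (real (Suc n))"
    by metis
  have key: "(norm (a - b))^2 \<le> 2*(norm (x - a))^2 + 2*(norm (x - b))^2 - 4*d^2"
    if "a \<in> M" "b \<in> M" for a b
  proof -
    have mid: "scaleR (1/2) (a + b) \<in> M" using that sub
      by (intro csubspace_scaleR) (auto simp: csubspace_def)
    have "(x - a) + (x - b) = scaleR 2 (x - scaleR (1/2) (a + b))"
      by (simp add: algebra_simps scaleR_2)
    then have "norm ((x - a) + (x - b)) = 2 * norm (x - scaleR (1/2) (a + b))" by simp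
    then have "2 * d \<le> norm ((x - a) + (x - b))" using dle[OF mid] by simp
    then have "(2 * d)^2 \<le> (norm ((x - a) + (x - b)))^2" using d0
      by (intro power_mono) auto
    then have "4 * d^2 \<le> (norm ((x - a) + (x - b)))^2" by (simp add: power_mult_distrib)
    moreover have "(norm ((x - a) - (x - b)))^2 = (norm (a - b))^2"
      using norm_minus_commute[of b a] by simp
    ultimately show ?thesis using parallelogram[of "x - a" "x - b"] by linarith
  qed
  have "Cauchy f"
  proof (rule metric_CauchyI)
    fix e :: real assume e: "0 < e"
    obtain N :: nat where N: "(8*d+4) / e^2 < real N" using reals_Archimedean2 by blast
    have Npos: "0 < real N" using N e d0
      by (metis divide_nonneg_pos le_less_trans zero_less_power
          add_nonneg_nonneg mult_nonneg_nonneg zero_le_numeral zero_le_one)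
    have small: "(8*d+4) * inverse (real (Suc N)) < e^2"
    proof -
      have "(8*d+4) * inverse (real (Suc N)) \<le> (8*d+4) / real N"
        using Npos d0 by (simp add: divide_simps)
      also have "\<dots> < e^2" using N e Npos by (simp add: divide_simps mult.commute)
      finally show ?thesis .
    qed
    show "\<exists>M. \<forall>m\<ge>M. \<forall>n\<ge>M. dist (f m) (f n) < e"
    proof (intro exI allI impI)
      fix m n assume mn: "N \<le> m" "N \<le> n"
      define \<epsilon> where "\<epsilon> = inverse (real (Suc N))"
      have eps: "0 < \<epsilon>" "\<epsilon> \<le> 1" by (auto simp: \<epsilon>_def inverse_le_1_iff)
      have em: "inverse (real (Suc m)) \<le> \<epsilon>" "inverse (real (Suc n)) \<le> \<epsilon>"
        using mn by (auto simp: \<epsilon>_def intro!: le_imp_inverse_le)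
      define p where "p = norm (x - f m) - d"
      define q where "q = norm (x - f n) - d"
      have p: "0 \<le> p" "p \<le> \<epsilon>" using dle[OF f(1)[of m]] f(2)[of m] em by (auto simp: p_def)
      have q: "0 \<le> q" "q \<le> \<epsilon>" using dle[OF f(1)[of n]] f(2)[of n] em by (auto simp: q_def)
      have "(norm (f m - f n))^2 \<le> 2*(d+p)^2 + 2*(d+q)^2 - 4*d^2"
        using key[OF f(1) f(1)] by (simp add: p_def q_def)
      also have "\<dots> = 4*d*p + 2*p^2 + 4*d*q + 2*q^2" by (simp add: algebra_simps power2_eq_square)
      also have "\<dots> \<le> (8*d+4) * \<epsilon>"
      proof -
        have "p^2 \<le> \<epsilon>" "q^2 \<le> \<epsilon>" using p q eps
          by (metis order_trans mult_le_one power2_eq_square mult_right_mono mult_1_left)+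
        moreover have "d*p \<le> d*\<epsilon>" "d*q \<le> d*\<epsilon>" using p q d0 by (auto intro: mult_left_mono)
        ultimately show ?thesis by (simp add: algebra_simps)
      qed
      also have "\<dots> < e^2" using small by (simp add: \<epsilon>_def)
      finally have "(dist (f m) (f n))^2 < e^2" by (simp add: dist_norm)
      then show "dist (f m) (f n) < e" using e by (simp add: power_less_imp_less_base)
    qed
  qed
  then obtain m where lim: "f \<longlonglongrightarrow> m" using Cauchy_convergent convergent_def by blast
  have mM: "m \<in> M" using cl f(1) lim closed_sequentially by blast
  have "norm (x - m) \<le> d"
  proof (rule tendsto_le[OF trivial_limit_sequentially])
    show "(\<lambda>n. norm (x - f n)) \<longlonglongrightarrow> norm (x - m)" by (intro tendsto_intros lim)
    show "(\<lambda>n. d + inverse (real (Suc n))) \<longlonglongrightarrow> d"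
      using tendsto_add[OF tendsto_const LIMSEQ_inverse_real_of_nat] by simp
    show "\<forall>\<^sub>F n in sequentially. norm (x - f n) \<le> d + inverse (real (Suc n))"
      by (intro always_eventually allI less_imp_le[OF f(2)])
  qed
  then have nd: "norm (x - m) = d" using dle[OF mM] by simp
  have "x - m \<in> orth M" unfolding orth_def
  proof safe
    fix y assume yM: "y \<in> M"
    define z where "z = x - m"
    define w where "w = cinner y z"
    define t where "t = 1 / ((norm y)^2 + 1)"
    have ny: "0 \<le> (norm y)^2" by simp
    have t: "0 < t" "t * (norm y)^2 < 1" using ny by (auto simp: t_def divide_simps) (smt (verit) zero_le_power2)+
    have "m + scaleC (of_real t * w) y \<in> M" using sub mM yM by (auto simp: csubspace_def)
    then have "d \<le> norm (x - (m + scaleC (of_real t * w) y))" by (rule dle)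
    also have "x - (m + scaleC (of_real t * w) y) = z - scaleC (of_real t * w) y"
      by (simp add: z_def)
    finally have "d^2 \<le> (norm (z - scaleC (of_real t * w) y))^2"
      using d0 power_mono by blast
    also have "\<dots> = (norm z)^2 - 2*t*(cmod w)^2 + t^2*(cmod w)^2*(norm y)^2"
      unfolding w_def by (rule norm_diff_scale_sq)
    finally have "2*t*(cmod w)^2 \<le> t*(cmod w)^2 * (t*(norm y)^2)"
      using nd by (simp add: z_def power2_eq_square algebra_simps)
    also have "\<dots> \<le> t*(cmod w)^2" using t
      by (intro mult_left_le) auto
    finally have "(cmod w)^2 \<le> 0" using t by (simp add: algebra_simps)
    then show "cinner y (x - m) = 0" by (simp add: w_def z_def)
  qed
  then show ?thesis using mM by blast
qed

lemma decomposition: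
  fixes M :: "'a::chilbert_space set"
  assumes "closed_csubspace M"
  shows "\<exists>a\<in>M. \<exists>b\<in>orth M. x = a + b"
  using projection_exists[OF assms, of x] by force

lemma orth_zero_imp_UNIV:
  fixes M :: "'a::chilbert_space set"
  assumes "closed_csubspace M" "orth M = {0}"
  shows "M = UNIV"
  using decomposition[OF assms(1)] assms(2) by auto

lemma polarization:
  fixes U :: "'a::complex_inner \<Rightarrow> 'b::complex_inner"
  assumes U: "clinear U" "\<And>x. norm (U x) = norm x"
  shows "cinner (U x) (U y) = cinner x y"
proof -
  have re: "Re (cinner (U a) (U b)) = Re (cinner a b)" for a b
  proof -
    have "norm (U a + U b) = norm (a + b)" using U(2)[of "a+b"] clinear_add[OF U(1), of a b] by simp
    then show ?thesis using norm_add_sq[of "U a" "U b"] norm_add_sq[of a b] U(2) by simp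
  qed
  have "Re (cinner (U x) (U (scaleC \<i> y))) = Re (cinner x (scaleC \<i> y))" by (rule re)
  then have im: "Im (cinner (U x) (U y)) = Im (cinner x y)"
    by (simp add: clinear_scaleC[OF U(1)] cinner_scaleC_right)
  show ?thesis using re[of x y] im by (simp add: complex_eqI)
qed



lemma pi_clinear: "partial_isometry S \<Longrightarrow> clinear S"
  unfolding partial_isometry_def bounded_clinear_def by blast

lemma pi_bounded_linear: "partial_isometry S \<Longrightarrow> bounded_linear S"
  unfolding partial_isometry_def using bounded_clinear_bounded_linear by blast

lemma pi_iso: "partial_isometry S \<Longrightarrow> x \<in> orth (ker S) \<Longrightarrow> norm (S x) = norm x"
  unfolding partial_isometry_def by blast

lemma closed_csubspace_ker:
  assumes "partial_isometry (S::'a::chilbert_space \<Rightarrow> 'a)"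
  shows "closed_csubspace (ker S)"
proof -
  have c: "clinear S" using pi_clinear[OF assms] .
  have "csubspace (ker S)" unfolding csubspace_def ker_def
    using c by (auto simp: clinear_zero clinear_add clinear_scaleC)
  moreover have "closed (ker S)" unfolding ker_def
    by (intro closed_Collect_eq continuous_on_const linear_continuous_on pi_bounded_linear[OF assms])
  ultimately show ?thesis by (simp add: closed_csubspace_def)
qed

lemma csubspace_range: assumes "clinear S" shows "csubspace (range S)"
  unfolding csubspace_def
proof (intro conjI ballI allI)
  show "0 \<in> range S" using clinear_zero[OF assms] by (metis rangeI)
  fix x y assume "x \<in> range S" "y \<in> range S"
  then obtain a b where "x = S a" "y = S b" by blast
  then show "x + y \<in> range S" using clinear_add[OF assms, of a b] by (metis rangeI)
next
  fix c x assume "x \<in> range S" then obtain a where "x = S a" by blast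
  then show "scaleC c x \<in> range S" using clinear_scaleC[OF assms, of c a] by (metis rangeI)
qed

lemma closed_range_pi:
  assumes PI: "partial_isometry (S::'a::chilbert_space \<Rightarrow> 'a)"
  shows "closed (range S)"
  unfolding closed_sequential_limits
proof safe
  fix g y assume g: "\<forall>n. g n \<in> range S" "g \<longlonglongrightarrow> y"
  have cl: "closed_csubspace (ker S)" by (rule closed_csubspace_ker[OF PI])
  have c: "clinear S" using pi_clinear[OF PI] .
  have ex: "\<exists>h. h \<in> orth (ker S) \<and> S h = g n" for n
  proof -
    obtain z where z: "g n = S z" using g(1) by blast
    obtain a b where ab: "a \<in> ker S" "b \<in> orth (ker S)" "z = a + b"
      using decomposition[OF cl, of z] by blast
    have "S z = S b" using ab c by (simp add: clinear_add ker_def)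
    then show ?thesis using ab z by auto
  qed
  have "\<forall>n. \<exists>h. h \<in> orth (ker S) \<and> S h = g n" using ex by blast
  then obtain h where h0: "\<forall>n. h n \<in> orth (ker S) \<and> S (h n) = g n"
    by (rule choice[THEN exE]) blast
  then have h: "\<And>n. h n \<in> orth (ker S)" "\<And>n. S (h n) = g n" by auto
  have dist_eq: "dist (h m) (h n) = dist (g m) (g n)" for m n
  proof -
    have "h m - h n \<in> orth (ker S)" by (rule csubspace_diff[OF csubspace_orth h(1) h(1)])
    then have "norm (S (h m - h n)) = norm (h m - h n)" by (rule pi_iso[OF PI])
    then show ?thesis using h(2) by (simp add: dist_norm clinear_diff[OF c])
  qed
  have "Cauchy g" using g(2) by (rule LIMSEQ_imp_Cauchy)
  then have "Cauchy h" unfolding Cauchy_def dist_eq .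
  then obtain x where x: "h \<longlonglongrightarrow> x" using Cauchy_convergent[of h] unfolding convergent_def by blast
  have "(\<lambda>n. S (h n)) \<longlonglongrightarrow> S x"
    by (rule bounded_linear.tendsto[OF pi_bounded_linear[OF PI] x])
  then have "g \<longlonglongrightarrow> S x" using h(2) by simp
  then have "y = S x" by (rule LIMSEQ_unique[OF g(2)])
  then show "y \<in> range S" by blast
qed

lemma closed_csubspace_range_pi:
  "partial_isometry (S::'a::chilbert_space \<Rightarrow> 'a) \<Longrightarrow> closed_csubspace (range S)"
  unfolding closed_csubspace_def using closed_range_pi csubspace_range pi_clinear by blast

lemma zpow_step:
  assumes "bij U"
  shows "U (zpow U n k) = zpow U (n + 1) k"
proof (cases "0 \<le> n")
  case True
  then have eq: "nat (n + 1) = Suc (nat n)" by simp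
  have "zpow U (n + 1) k = (U ^^ nat (n + 1)) k" using True by (simp add: zpow_def)
  also have "\<dots> = (U ^^ Suc (nat n)) k" by (simp only: eq)
  also have "\<dots> = U ((U ^^ nat n) k)" by (simp only: funpow.simps comp_def)
  also have "\<dots> = U (zpow U n k)" using True by (simp add: zpow_def)
  finally show ?thesis by (rule sym)
next
  case False
  define j where "j = nat (- (n + 1))"
  have nj: "nat (- n) = Suc j" using False by (simp add: j_def)
  have e1: "zpow U (n + 1) k = (inv U ^^ j) k"
  proof (cases "n + 1 = 0")
    case True then show ?thesis by (simp add: zpow_def j_def)
  next
    case False2: False
    then show ?thesis using False by (simp add: zpow_def j_def)
  qed
  have e2: "zpow U n k = inv U ((inv U ^^ j) k)"
    using False nj by (simp add: zpow_def)
  have e3: "U (inv U z) = z" for z using assms by (simp add: bij_is_surj surj_f_inv_f)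
  show ?thesis by (simp only: e1 e2 e3)
qed

lemma zpow_step_inv:
  assumes "bij U"
  shows "inv U (zpow U n k) = zpow U (n - 1) k"
proof -
  have "zpow U n k = U (zpow U (n - 1) k)" using zpow_step[OF assms, of "n - 1" k] by simp
  then show ?thesis using assms by (metis bij_is_inj inv_f_f)
qed

lemma zpow_clinear:
  assumes "clinear (U::'a::complex_inner \<Rightarrow> 'a)" "bij U"
  shows "clinear (zpow U n)"
proof (cases "0 \<le> n")
  case True
  then have "zpow U n = U ^^ nat n" by (simp add: zpow_def fun_eq_iff)
  then show ?thesis using clinear_funpow[OF assms(1)] by simp
next
  case False
  then have "zpow U n = inv U ^^ nat (- n)" by (simp add: zpow_def fun_eq_iff)
  then show ?thesis using clinear_funpow[OF clinear_inv[OF assms]] by simp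
qed

lemma unitary_bij:
  assumes "unitary (U::'a::chilbert_space \<Rightarrow> 'a)" shows "bij U"
proof -
  have U: "clinear U" "\<And>x. norm (U x) = norm x" "surj U" using assms unfolding unitary_def by auto
  have "inj U"
  proof (rule injI)
    fix x y assume "U x = U y"
    then have "norm (U (x - y)) = 0" using clinear_diff[OF U(1)] by simp
    then show "x = y" using U(2) by simp
  qed
  then show ?thesis using U(3) by (simp add: bij_def)
qed



lemma part1:
  fixes S :: "'a::chilbert_space \<Rightarrow> 'a"
  assumes PI: "partial_isometry S" and CNU: "completely_nonunitary S"
    and A: "unitary_between A (ker S) (orth (range S))" and Ul: "clinear U"
    and US: "\<forall>h\<in>orth (ker S). U h = S h" and UA: "\<forall>h\<in>ker S. U h = A h"
  shows "unitary U \<and> closure (cspan {zpow U n k | n k. k \<in> orth (range S)}) = UNIV"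
proof -
  define K where "K = orth (range S)"
  have Sl: "clinear S" using pi_clinear[OF PI] .
  have clker: "closed_csubspace (ker S)" by (rule closed_csubspace_ker[OF PI])
  have clran: "closed_csubspace (range S)" by (rule closed_csubspace_range_pi[OF PI])
  have Aiso: "\<And>x. x \<in> ker S \<Longrightarrow> norm (A x) = norm x"
    and Aim: "A ` ker S = K" using A unfolding unitary_between_def K_def by auto
  have AK: "A x \<in> K" if "x \<in> ker S" for x using Aim that by blast
  have Sker: "S a = 0" if "a \<in> ker S" for a using that by (simp add: ker_def)
  have iso: "norm (U x) = norm x" for x
  proof -
    obtain a b where ab: "a \<in> ker S" "b \<in> orth (ker S)" "x = a + b"
      using decomposition[OF clker, of x] by blast
    have Ux: "U x = A a + S b" using ab US UA clinear_add[OF Ul, of a b] by simp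
    have "cinner (S b) (A a) = 0" using AK[OF ab(1)] unfolding K_def orth_def by blast
    then have o1: "cinner (A a) (S b) = 0" by (metis cinner_commute complex_cnj_zero)
    have o2: "cinner a b = 0" using ab(1,2) unfolding orth_def by blast
    have "(norm (U x))^2 = (norm (A a))^2 + (norm (S b))^2" using Ux pythagoras[OF o1] by simp
    also have "\<dots> = (norm a)^2 + (norm b)^2" using Aiso[OF ab(1)] pi_iso[OF PI ab(2)] by simp
    also have "\<dots> = (norm x)^2" using pythagoras[OF o2] ab(3) by simp
    finally show ?thesis by (simp add: power2_eq_iff_nonneg)
  qed
  have surj: "surj U"
  proof -
    have "y \<in> range U" for y
    proof -
      obtain r k where rk: "r \<in> range S" "k \<in> orth (range S)" "y = r + k"
        using decomposition[OF clran, of y] by blast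
      obtain z where z: "r = S z" using rk(1) by blast
      obtain a b where ab: "a \<in> ker S" "b \<in> orth (ker S)" "z = a + b"
        using decomposition[OF clker, of z] by blast
      have "r = U b" using z ab US Sker clinear_add[OF Sl, of a b] by simp
      moreover obtain w where w: "w \<in> ker S" "k = A w" using rk(2) Aim unfolding K_def by blast
      moreover have "k = U w" using w UA by simp
      ultimately have "y = U (b + w)" using rk(3) clinear_add[OF Ul, of b w] by simp
      then show ?thesis by blast
    qed
    then show ?thesis by blast
  qed
  have unit: "unitary U" unfolding unitary_def using Ul iso surj by blast
  have bij: "bij U" by (rule unitary_bij[OF unit])
  have UiU: "U (inv U x) = x" for x using bij by (simp add: bij_is_surj surj_f_inv_f)
  have iUU: "inv U (U x) = x" for x using bij by (simp add: bij_is_inj)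
  have iUl: "clinear (inv U)" by (rule clinear_inv[OF Ul bij])
  have iUiso: "norm (inv U x) = norm x" for x using iso[of "inv U x"] UiU by simp
  have cinU: "cinner (U x) (U y) = cinner x y" for x y by (rule polarization[OF Ul iso])
  have Ubl: "bounded_linear U" by (rule clinear_isometry_bounded_linear[OF Ul iso])
  have iUbl: "bounded_linear (inv U)" by (rule clinear_isometry_bounded_linear[OF iUl iUiso])
  define G where "G = {zpow U n k | n k. k \<in> orth (range S)}"
  define M where "M = closure (cspan G)"
  have GM: "G \<subseteq> M" unfolding M_def using cspan_superset closure_subset by blast
  have UG: "U ` G \<subseteq> G"
  proof
    fix y assume "y \<in> U ` G"
    then obtain n k where "k \<in> orth (range S)" "y = U (zpow U n k)" unfolding G_def by blast
    then show "y \<in> G" unfolding G_def using zpow_step[OF bij, of n k] by blast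
  qed
  have iUG: "inv U ` G \<subseteq> G"
  proof
    fix y assume "y \<in> inv U ` G"
    then obtain n k where "k \<in> orth (range S)" "y = inv U (zpow U n k)" unfolding G_def by blast
    then show "y \<in> G" unfolding G_def using zpow_step_inv[OF bij, of n k] by blast
  qed
  have Mcl: "closed_csubspace M" unfolding M_def closed_csubspace_def
    by (simp add: csubspace_closure csubspace_cspan)
  have inv_M: "f ` M \<subseteq> M" if "bounded_linear f" "clinear f" "f ` G \<subseteq> G" for f
  proof -
    have "f ` cspan G \<subseteq> cspan G"
      using clinear_image_cspan[OF that(2)] that(3) cspan_superset by blast
    then have "f ` cspan G \<subseteq> M" unfolding M_def using closure_subset by blast
    then show ?thesis unfolding M_def
      by (intro image_closure_subset linear_continuous_on that(1)) auto
  qed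
  have UM: "U ` M \<subseteq> M" by (rule inv_M[OF Ubl Ul UG])
  have iUM: "inv U ` M \<subseteq> M" by (rule inv_M[OF iUbl iUl iUG])
  define N where "N = orth M"
  have KM: "K \<subseteq> M"
  proof
    fix k assume "k \<in> K"
    then have "zpow U 0 k \<in> G" unfolding G_def K_def by blast
    then show "k \<in> M" using GM by (auto simp: zpow_def)
  qed
  have kerM: "ker S \<subseteq> M"
  proof
    fix a assume a: "a \<in> ker S"
    have "zpow U (-1) (A a) \<in> G" using AK[OF a] unfolding G_def K_def by blast
    moreover have "zpow U (-1) (A a) = a"
    proof -
      have "A a = U a" using UA a by simp
      then show ?thesis using iUU[of a] by (simp add: zpow_def)
    qed
    ultimately show "a \<in> M" using GM by auto
  qed
  have NI: "N \<subseteq> orth (ker S)" unfolding N_def by (rule orth_antimono[OF kerM])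
  have UN: "U ` N \<subseteq> N"
  proof
    fix y assume "y \<in> U ` N"
    then obtain h where h: "h \<in> N" "y = U h" by blast
    have "cinner x (U h) = 0" if "x \<in> M" for x
    proof -
      have "cinner x (U h) = cinner (U (inv U x)) (U h)" by (simp add: UiU)
      also have "\<dots> = cinner (inv U x) h" by (rule cinU)
      also have "\<dots> = 0" using iUM that h(1) unfolding N_def orth_def by blast
      finally show ?thesis .
    qed
    then show "y \<in> N" using h unfolding N_def orth_def by blast
  qed
  have iUN: "inv U ` N \<subseteq> N"
  proof
    fix y assume "y \<in> inv U ` N"
    then obtain h where h: "h \<in> N" "y = inv U h" by blast
    have "cinner x (inv U h) = 0" if "x \<in> M" for x
    proof -
      have "cinner x (inv U h) = cinner (U x) (U (inv U h))" by (rule cinU[symmetric])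
      also have "\<dots> = cinner (U x) h" by (simp add: UiU)
      also have "\<dots> = 0" using UM that h(1) unfolding N_def orth_def by blast
      finally show ?thesis .
    qed
    then show "y \<in> N" using h unfolding N_def orth_def by blast
  qed
  have SN: "S ` N \<subseteq> N" using UN NI US by force
  have SoN: "S ` orth N \<subseteq> orth N"
  proof
    fix y assume "y \<in> S ` orth N"
    then obtain x where x: "x \<in> orth N" "y = S x" by blast
    obtain a b where ab: "a \<in> ker S" "b \<in> orth (ker S)" "x = a + b"
      using decomposition[OF clker, of x] by blast
    have "S x = S b" using ab Sker clinear_add[OF Sl, of a b] by simp
    also have "\<dots> = U b" using US ab by simp
    also have "\<dots> = U x - A a" using ab UA clinear_add[OF Ul, of a b] by simp
    finally have y: "y = U x - A a" using x by simp
    have Ux: "U x \<in> orth N" unfolding orth_def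
    proof safe
      fix h assume h: "h \<in> N"
      have "cinner h (U x) = cinner (U (inv U h)) (U x)" by (simp add: UiU)
      also have "\<dots> = cinner (inv U h) x" by (rule cinU)
      also have "\<dots> = 0" using iUN h x(1) unfolding orth_def by blast
      finally show "cinner h (U x) = 0" .
    qed
    have "A a \<in> orth N" using AK[OF ab(1)] KM orth_orth_sup[of M] unfolding N_def by blast
    then show "y \<in> orth N" using y Ux csubspace_diff[OF csubspace_orth] by simp
  qed
  have red: "reducing_subspace S N"
    unfolding reducing_subspace_def N_def using closed_csubspace_orth SN SoN N_def by blast
  have uon: "unitary_on S N" unfolding unitary_on_def
  proof safe
    fix x assume "x \<in> N" then show "norm (S x) = norm x" using NI pi_iso[OF PI] by blast
  next
    fix x assume "x \<in> N" then show "S x \<in> N" using SN by blast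
  next
    fix x assume x: "x \<in> N"
    then have "inv U x \<in> N" using iUN by blast
    moreover have "S (inv U x) = x" using NI US UiU calculation by force
    ultimately show "x \<in> S ` N" by force
  qed
  have "N = {0}" using CNU red uon unfolding completely_nonunitary_def by blast
  then have "M = UNIV" using orth_zero_imp_UNIV[OF Mcl] unfolding N_def by blast
  then show ?thesis using unit unfolding M_def G_def by blast
qed



lemma onb_line:
  fixes V :: "'a::chilbert_space set"
  assumes onb: "orthonormal_basis V B" and c1: "card B = 1" and x: "x \<in> V"
  shows "\<exists>b. cinner b b = 1 \<and> x = scaleC (cinner b x) b"
proof -
  obtain b where B: "B = {b}" using c1 card_1_singletonE by blast
  have bb: "cinner b b = 1" and V: "closure (cspan {b}) = V"
    using onb B unfolding orthonormal_basis_def by auto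
  define Z where "Z = {y::'a. y - scaleC (cinner b y) b = 0}"
  have "closed Z" unfolding Z_def
  proof (intro closed_Collect_eq continuous_on_const continuous_on_diff continuous_on_id)
    show "continuous_on UNIV (\<lambda>y. scaleC (cinner b y) b)"
      by (rule continuous_on_compose2[OF continuous_scaleC_left[of b]
          linear_continuous_on[OF bounded_bilinear.bounded_linear_right[OF bounded_bilinear_cinner]]]) auto
  qed
  moreover have "cspan {b} \<subseteq> Z"
  proof
    fix y assume "y \<in> cspan {b}"
    then obtain F c where F: "F \<subseteq> {b}" "y = (\<Sum>x\<in>F. scaleC (c x) x)" unfolding cspan_def by auto
    then have "F = {} \<or> F = {b}" by blast
    then show "y \<in> Z"
    proof
      assume "F = {}" then show ?thesis using F by (simp add: Z_def)
    next
      assume "F = {b}" then have "y = scaleC (c b) b" using F by simp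
      then show ?thesis by (simp add: Z_def cinner_scaleC_right bb)
    qed
  qed
  ultimately have "V \<subseteq> Z" using V closure_minimal by blast
  then show ?thesis using x bb unfolding Z_def by auto
qed

lemma dim_one_line:
  fixes V :: "'a::chilbert_space set"
  assumes "hilbert_dim_one V" "u \<in> V" "norm u = 1" "x \<in> V"
  shows "\<exists>c. x = scaleC c u"
proof -
  obtain B where B: "orthonormal_basis V B" "card B = 1" using assms(1) unfolding hilbert_dim_one_def by blast
  then obtain b0 where B0: "B = {b0}" using card_1_singletonE by blast
  have V: "closure (cspan {b0}) = V" "cinner b0 b0 = 1" using B(1) B0 unfolding orthonormal_basis_def by auto
  have line: "y = scaleC (cinner b0 y) b0" if "y \<in> V" for y
  proof -
    define Z where "Z = {y::'a. y - scaleC (cinner b0 y) b0 = 0}"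
    have "closed Z" unfolding Z_def
    proof (intro closed_Collect_eq continuous_on_const continuous_on_diff continuous_on_id)
      show "continuous_on UNIV (\<lambda>y. scaleC (cinner b0 y) b0)"
        by (rule continuous_on_compose2[OF continuous_scaleC_left[of b0]
            linear_continuous_on[OF bounded_bilinear.bounded_linear_right[OF bounded_bilinear_cinner]]]) auto
    qed
    moreover have "cspan {b0} \<subseteq> Z"
    proof
      fix y assume "y \<in> cspan {b0}"
      then obtain F c where F: "F \<subseteq> {b0}" "y = (\<Sum>x\<in>F. scaleC (c x) x)" unfolding cspan_def by auto
      then have "F = {} \<or> F = {b0}" by blast
      then show "y \<in> Z"
      proof
        assume "F = {}" then show ?thesis using F by (simp add: Z_def)
      next
        assume "F = {b0}" then have "y = scaleC (c b0) b0" using F by simp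
        then show ?thesis by (simp add: Z_def cinner_scaleC_right V(2))
      qed
    qed
    ultimately have "V \<subseteq> Z" using V closure_minimal by blast
    then show ?thesis using that unfolding Z_def by auto
  qed
  define \<beta> where "\<beta> = cinner b0 u"
  define \<gamma> where "\<gamma> = cinner b0 x"
  have "(norm b0)^2 = 1" using norm_sq_cinner[of b0] V(2) by simp
  then have nb: "norm b0 = 1" using norm_ge_zero[of b0] by (simp add: power2_eq_1_iff)
  have u': "u = scaleC \<beta> b0" using line[OF assms(2)] by (simp add: \<beta>_def)
  have x': "x = scaleC \<gamma> b0" using line[OF assms(4)] by (simp add: \<gamma>_def)
  have "cmod \<beta> = 1" using assms(3) u' nb by (simp add: norm_scaleC)
  then have b0: "\<beta> \<noteq> 0" by auto
  have "x = scaleC (\<gamma> / \<beta>) u" using b0 by (simp add: u' x' scaleC_scaleC)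
  then show ?thesis by blast
qed

theorem mainTheorem4:
  fixes S :: "'a::chilbert_space \<Rightarrow> 'a"
  assumes "partial_isometry S"
    and "completely_nonunitary S"
    and "same_hilbert_dim (orth (range S)) (ker S)"
  shows "(\<forall>A U. unitary_between A (ker S) (orth (range S)) \<and> clinear U \<and>
            (\<forall>h\<in>orth (ker S). U h = S h) \<and> (\<forall>h\<in>ker S. U h = A h) \<longrightarrow>
            unitary U \<and>
            closure (cspan {zpow U n k | n k. k \<in> orth (range S)}) = UNIV)
       \<and> (hilbert_dim_one (orth (range S)) \<and> hilbert_dim_one (ker S) \<longrightarrow>
            (\<forall>k \<alpha> kt U. k \<in> orth (range S) \<and> norm k = 1 \<and> cmod \<alpha> = 1 \<and>
               kt \<in> ker S \<and> norm kt = 1 \<and> clinear U \<and>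
               (\<forall>h\<in>orth (ker S). U h = S h) \<and> U kt = scaleC \<alpha> k \<longrightarrow>
               closure (cspan {zpow U n k | n. True}) = UNIV))"
proof (rule conjI, goal_cases)
  case 1 show ?case
    by (intro allI impI, elim conjE, rule part1[OF assms(1,2)]) assumption+
next
  case 2 show ?case
  proof (intro impI allI)
  fix k \<alpha> kt U
  assume d1: "hilbert_dim_one (orth (range S)) \<and> hilbert_dim_one (ker S)"
    and h: "k \<in> orth (range S) \<and> norm k = 1 \<and> cmod \<alpha> = 1 \<and>
               kt \<in> ker S \<and> norm kt = 1 \<and> clinear U \<and>
               (\<forall>h\<in>orth (ker S). U h = S h) \<and> U kt = scaleC \<alpha> k"
  define K where "K = orth (range S)"
  have k: "k \<in> K" "norm k = 1" using h by (auto simp: K_def)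
  have a1: "cmod \<alpha> = 1" using h by blast
  have kt: "kt \<in> ker S" "norm kt = 1" using h by auto
  have Ul: "clinear U" and US: "\<forall>h\<in>orth (ker S). U h = S h" and Ukt: "U kt = scaleC \<alpha> k"
    using h by auto
  have a0: "\<alpha> \<noteq> 0" using a1 by auto
  have Kcs: "csubspace K" unfolding K_def by (rule csubspace_orth)
  have kercs: "csubspace (ker S)" using closed_csubspace_ker[OF assms(1)] by (simp add: closed_csubspace_def)
  have kerline: "\<exists>c. x = scaleC c kt" if "x \<in> ker S" for x
    by (rule dim_one_line) (use d1 kt that in auto)
  have Kline: "\<exists>c. x = scaleC c k" if "x \<in> K" for x
    by (rule dim_one_line) (use d1 k that in \<open>auto simp: K_def\<close>)
  have Uc: "U (scaleC c kt) = scaleC (c * \<alpha>) k" for c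
    using clinear_scaleC[OF Ul] Ukt by (simp add: scaleC_scaleC)
  have ub: "unitary_between U (ker S) K"
    unfolding unitary_between_def
  proof (intro conjI ballI allI)
    fix x y show "U (x + y) = U x + U y" by (rule clinear_add[OF Ul])
  next
    fix c x show "U (scaleC c x) = scaleC c (U x)" by (rule clinear_scaleC[OF Ul])
  next
    fix x assume "x \<in> ker S"
    then obtain c where c: "x = scaleC c kt" using kerline by blast
    show "norm (U x) = norm x" using c Uc kt(2) k(2) a1 by (simp add: norm_scaleC norm_mult)
  next
    show "U ` ker S = K"
    proof
      show "U ` ker S \<subseteq> K"
      proof
        fix y assume "y \<in> U ` ker S"
        then obtain x where "x \<in> ker S" "y = U x" by blast
        then obtain c where "y = scaleC (c * \<alpha>) k" using kerline Uc by blast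
        then show "y \<in> K" using Kcs k(1) unfolding csubspace_def by blast
      qed
    next
      show "K \<subseteq> U ` ker S"
      proof
        fix y assume "y \<in> K"
        then obtain c where c: "y = scaleC c k" using Kline by blast
        have "scaleC (c / \<alpha>) kt \<in> ker S" using kercs kt(1) unfolding csubspace_def by blast
        moreover have "U (scaleC (c / \<alpha>) kt) = y" using Uc a0 c by simp
        ultimately show "y \<in> U ` ker S" by force
      qed
    qed
  qed
  have P: "unitary U \<and> closure (cspan {zpow U n k' | n k'. k' \<in> K}) = UNIV"
    using part1[OF assms(1,2) ub[unfolded K_def] Ul US] unfolding K_def by blast
  have bij: "bij U" using P unitary_bij by blast
  have "{zpow U n k' | n k'. k' \<in> K} \<subseteq> cspan {zpow U n k | n. True}"
  proof
    fix y assume "y \<in> {zpow U n k' | n k'. k' \<in> K}"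
    then obtain n k' where y: "y = zpow U n k'" "k' \<in> K" by blast
    obtain c where c: "k' = scaleC c k" using Kline y(2) by blast
    have "y = zpow U n (scaleC c k)" using y c by simp
    also have "\<dots> = scaleC c (zpow U n k)" by (rule clinear_scaleC[OF zpow_clinear[OF Ul bij]])
    finally have "y = scaleC c (zpow U n k)" .
    moreover have "zpow U n k \<in> {zpow U n k | n. True}" by blast
    then have "zpow U n k \<in> cspan {zpow U n k | n. True}" by (rule subsetD[OF cspan_superset])
    then have "scaleC c (zpow U n k) \<in> cspan {zpow U n k | n. True}"
      using csubspace_cspan[of "{zpow U n k | n. True}"] unfolding csubspace_def by blast
    ultimately show "y \<in> cspan {zpow U n k | n. True}" by simp
  qed
  then have "cspan {zpow U n k' | n k'. k' \<in> K} \<subseteq> cspan {zpow U n k | n. True}"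
    by (rule cspan_mono2)
  then have "closure (cspan {zpow U n k' | n k'. k' \<in> K}) \<subseteq> closure (cspan {zpow U n k | n. True})"
    by (rule closure_mono)
  then show "closure (cspan {zpow U n k | n. True}) = UNIV" using P by auto
  qed
qed


end
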